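(* In the absence of the UAV speed constraint (i.e. allowing arbitrary measurable trajectories $x:[0,T]\to\mathbb{R}$), for any $T>0$ the capacity region of the UAV-enabled two-user broadcast channel is $$\hat{\mathcal{C}}(\bar P)=\left\{(r_1,r_2): r_1+r_2\le\log_2\left(1+\frac{\bar P\beta_0}{H^2}\right),\ r_1\ge0,\ r_2\ge0\right\}.$$
   Context: Fix $D>0$, $H>0$, $\beta_0>0$, $\bar P>0$. Ground users GU 1, GU 2 are at horizontal positions $x_1=-D/2$, $x_2=D/2$; for UAV position $x\in\mathbb{R}$ (constant altitude $H$), $h_k(x)=\beta_0/((x-x_k)^2+H^2)$. A power allocation is a pair of measurable functions $p_1,p_2:[0,T]\to[0,\infty)$ with $p_1(t)+p_2(t)\le\bar P$. $\mathcal{C}(x,p)$ is the set of $(r_1,r_2)$, $r_1,r_2\ge0$, with $r_1\le\frac1T\int_0^T\log_2(1+p_1(t)h_1(x(t)))dt$, $r_2\le\frac1T\int_0^T\log_2(1+p_2(t)h_2(x(t)))dt$, $r_1+r_2\le\frac1T\int_0^T\log_2(1+p_1(t)h_1(x(t))+p_2(t)h_2(x(t)))dt$. The capacity region here is the union of $\mathcal{C}(x,p)$ over all such $x$ and $p$. *)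

theory Defs
  imports "HOL-Analysis.Analysis"
begin

text \<open>Channel power gain from a UAV at horizontal position x (altitude H)
  to a ground user at horizontal position xk.\<close>
definition chan_gain :: "real \<Rightarrow> real \<Rightarrow> real \<Rightarrow> real \<Rightarrow> real" where
  "chan_gain \<beta>0 H xk x = \<beta>0 / ((x - xk)^2 + H^2)"

definition avg_rate :: "real \<Rightarrow> (real \<Rightarrow> real) \<Rightarrow> real" where
  "avg_rate T g = (1 / T) * (LINT t:{0..T}|lborel. g t)"

definition admissible :: "real \<Rightarrow> real \<Rightarrow> (real \<Rightarrow> real) \<Rightarrow> (real \<Rightarrow> real) \<Rightarrow> (real \<Rightarrow> real) \<Rightarrow> bool" where
  "admissible Pbar T x p1 p2 \<longleftrightarrow>
     set_borel_measurable lborel {0..T} x \<and>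
     set_borel_measurable lborel {0..T} p1 \<and>
     set_borel_measurable lborel {0..T} p2 \<and>
     (\<forall>t\<in>{0..T}. p1 t \<ge> 0 \<and> p2 t \<ge> 0 \<and> p1 t + p2 t \<le> Pbar)"

definition rate_region :: "real \<Rightarrow> real \<Rightarrow> real \<Rightarrow> real \<Rightarrow> (real \<Rightarrow> real) \<Rightarrow> (real \<Rightarrow> real) \<Rightarrow> (real \<Rightarrow> real) \<Rightarrow> (real \<times> real) set" where
  "rate_region D H \<beta>0 T x p1 p2 =
     {(r1, r2). r1 \<ge> 0 \<and> r2 \<ge> 0 \<and>
        r1 \<le> avg_rate T (\<lambda>t. log 2 (1 + p1 t * chan_gain \<beta>0 H (- D / 2) (x t))) \<and>
        r2 \<le> avg_rate T (\<lambda>t. log 2 (1 + p2 t * chan_gain \<beta>0 H (D / 2) (x t))) \<and>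
        r1 + r2 \<le> avg_rate T (\<lambda>t. log 2 (1 + p1 t * chan_gain \<beta>0 H (- D / 2) (x t)
                                             + p2 t * chan_gain \<beta>0 H (D / 2) (x t)))}"

definition capacity_region :: "real \<Rightarrow> real \<Rightarrow> real \<Rightarrow> real \<Rightarrow> real \<Rightarrow> (real \<times> real) set" where
  "capacity_region D H \<beta>0 Pbar T =
     (\<Union>{rate_region D H \<beta>0 T x p1 p2 | x p1 p2. admissible Pbar T x p1 p2})"

end

theory Submission imports Defs begin
lemma lint_step:
  fixes a b s T :: real
  assumes "0 \<le> s" "s \<le> T"
  shows "(LINT t:{0..T}|lborel. (if t < s then a else b)) = a * s + b * (T - s)"
proof -
  have e: "\<And>t. indicator {0..T} t *\<^sub>R (if t < s then a else b)
      = a * indicator {0..<s} t + b * indicator {s..T} t"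
    using assms by (auto simp: indicator_def)
  have i1: "integrable lborel (\<lambda>t. a * indicator {0..<s} t :: real)"
    by (intro integrable_mult_right integrable_real_indicator) (use assms in auto)
  have i2: "integrable lborel (\<lambda>t. b * indicator {s..T} t :: real)"
    by (intro integrable_mult_right integrable_real_indicator) (use assms in auto)
  have "(LINT t:{0..T}|lborel. (if t < s then a else b))
      = (LINT t|lborel. a * indicator {0..<s} t + b * indicator {s..T} t)"
    unfolding set_lebesgue_integral_def e ..
  also have "\<dots> = a * measure lborel {0..<s} + b * measure lborel {s..T}"
    by (simp add: Bochner_Integration.integral_add[OF i1 i2])
  also have "\<dots> = a * s + b * (T - s)" using assms by simp
  finally show ?thesis .
qed

lemma lint_le:
  fixes g :: "real \<Rightarrow> real" and C T :: real
  assumes "0 \<le> C" "0 \<le> T" "\<And>t. t \<in> {0..T} \<Longrightarrow> g t \<le> C"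
  shows "(LINT t:{0..T}|lborel. g t) \<le> C * T"
proof (cases "set_integrable lborel {0..T} g")
  case True
  have ci: "set_integrable lborel {0..T} (\<lambda>t. C)"
    using assms by (simp add: set_integrable_def integrable_real_mult_indicator)
  have "(LINT t:{0..T}|lborel. g t) \<le> (LINT t:{0..T}|lborel. C)"
    by (rule set_integral_mono[OF True ci]) (use assms in auto)
  also have "\<dots> = C * T"
    using lint_step[of 0 T C C] assms by simp
  finally show ?thesis .
next
  case False
  then have "(LINT t:{0..T}|lborel. g t) = 0"
    by (simp add: set_lebesgue_integral_def set_integrable_def not_integrable_integral_eq)
  then show ?thesis using assms by simp
qed

lemma gain_bounds:
  assumes "H > 0" "\<beta>0 > 0"
  shows "0 \<le> chan_gain \<beta>0 H xk x" "chan_gain \<beta>0 H xk x \<le> \<beta>0 / H^2"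
proof -
  have "H^2 > 0" using assms by simp
  then show "0 \<le> chan_gain \<beta>0 H xk x" unfolding chan_gain_def
    using assms by (intro divide_nonneg_pos) (auto intro: add_nonneg_pos)
  show "chan_gain \<beta>0 H xk x \<le> \<beta>0 / H^2" unfolding chan_gain_def
    using assms \<open>H^2 > 0\<close>
    by (intro divide_left_mono) (auto intro!: mult_pos_pos add_nonneg_pos)
qed

theorem proposition1:
  fixes D H \<beta>0 Pbar T :: real
  assumes "D > 0" and "H > 0" and "\<beta>0 > 0" and "Pbar > 0" and "T > 0"
  shows "capacity_region D H \<beta>0 Pbar T =
           {(r1, r2). r1 + r2 \<le> log 2 (1 + Pbar * \<beta>0 / H^2) \<and> r1 \<ge> 0 \<and> r2 \<ge> 0}"
proof (rule set_eqI, safe)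
  define L where "L = log 2 (1 + Pbar * \<beta>0 / H^2)"
  have G: "Pbar * \<beta>0 / H^2 > 0" using assms by simp
  have Lpos: "L > 0" unfolding L_def using G by simp
  {
    fix r1 r2
    assume "(r1, r2) \<in> capacity_region D H \<beta>0 Pbar T"
    then obtain x p1 p2 where adm: "admissible Pbar T x p1 p2"
      and r: "(r1, r2) \<in> rate_region D H \<beta>0 T x p1 p2"
      unfolding capacity_region_def by blast
    let ?g = "\<lambda>t. log 2 (1 + p1 t * chan_gain \<beta>0 H (- D / 2) (x t)
                                + p2 t * chan_gain \<beta>0 H (D / 2) (x t))"
    have pt: "?g t \<le> L" if t: "t \<in> {0..T}" for t
    proof -
      have p: "p1 t \<ge> 0" "p2 t \<ge> 0" "p1 t + p2 t \<le> Pbar"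
        using adm t unfolding admissible_def by auto
      note g1 = gain_bounds[OF assms(2,3), of "- D / 2" "x t"]
      note g2 = gain_bounds[OF assms(2,3), of "D / 2" "x t"]
      have a: "p1 t * chan_gain \<beta>0 H (- D / 2) (x t) \<le> p1 t * (\<beta>0 / H^2)"
        using p g1 by (intro mult_left_mono) auto
      have b: "p2 t * chan_gain \<beta>0 H (D / 2) (x t) \<le> p2 t * (\<beta>0 / H^2)"
        using p g2 by (intro mult_left_mono) auto
      have c: "(p1 t + p2 t) * (\<beta>0 / H^2) \<le> Pbar * (\<beta>0 / H^2)"
        using p assms by (intro mult_right_mono) auto
      have nn: "0 \<le> p1 t * chan_gain \<beta>0 H (- D / 2) (x t) + p2 t * chan_gain \<beta>0 H (D / 2) (x t)"
        using p g1 g2 by simp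
      have "1 + p1 t * chan_gain \<beta>0 H (- D / 2) (x t) + p2 t * chan_gain \<beta>0 H (D / 2) (x t)
            \<le> 1 + Pbar * \<beta>0 / H^2"
        using a b c by (simp only: distrib_right times_divide_eq_right[symmetric])
      then show ?thesis unfolding L_def using nn by (subst log_le_cancel_iff) auto
    qed
    have "r1 + r2 \<le> avg_rate T ?g" using r unfolding rate_region_def by auto
    also have "\<dots> \<le> (1 / T) * (L * T)"
      unfolding avg_rate_def using assms Lpos
      by (intro mult_left_mono lint_le) (use pt in auto)
    also have "\<dots> = L" using assms by simp
    finally show "r1 + r2 \<le> log 2 (1 + Pbar * \<beta>0 / H^2)" unfolding L_def .
    show "r1 \<ge> 0" "r2 \<ge> 0" using r unfolding rate_region_def by auto
  }
  {
    fix r1 r2 :: real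
    assume h: "r1 + r2 \<le> log 2 (1 + Pbar * \<beta>0 / H^2)" "r1 \<ge> 0" "r2 \<ge> 0"
    define s where "s = T * r1 / L"
    have s0: "0 \<le> s" unfolding s_def using h assms Lpos by simp
    have sT: "s \<le> T" unfolding s_def using h assms Lpos
      by (simp add: divide_le_eq L_def)
    define x where "x t = (if t < s then - D / 2 else D / 2)" for t
    define p1 where "p1 t = (if t < s then Pbar else 0)" for t
    define p2 where "p2 t = (if t < s then 0 else Pbar)" for t
    have hg: "chan_gain \<beta>0 H a a = \<beta>0 / H^2" for a unfolding chan_gain_def by simp
    have adm: "admissible Pbar T x p1 p2"
      unfolding admissible_def x_def p1_def p2_def set_borel_measurable_def
      using assms by (auto intro!: borel_measurable_times measurable_If borel_measurable_indicator)
    have e1: "(\<lambda>t. log 2 (1 + p1 t * chan_gain \<beta>0 H (- D / 2) (x t))) = (\<lambda>t. if t < s then L else 0)"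
      by (auto simp: p1_def x_def hg L_def)
    have e2: "(\<lambda>t. log 2 (1 + p2 t * chan_gain \<beta>0 H (D / 2) (x t))) = (\<lambda>t. if t < s then 0 else L)"
      by (auto simp: p2_def x_def hg L_def)
    have e3: "(\<lambda>t. log 2 (1 + p1 t * chan_gain \<beta>0 H (- D / 2) (x t)
                  + p2 t * chan_gain \<beta>0 H (D / 2) (x t))) = (\<lambda>t. if t < s then L else L)"
      by (auto simp: p1_def p2_def x_def hg L_def)
    have A1: "avg_rate T (\<lambda>t. if t < s then L else 0) = r1"
      unfolding avg_rate_def lint_step[OF s0 sT] using assms Lpos by (simp add: s_def)
    have A2: "avg_rate T (\<lambda>t. if t < s then 0 else L) = L - r1"
      unfolding avg_rate_def lint_step[OF s0 sT] using assms Lpos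
      by (simp add: field_simps s_def)
    have A3: "avg_rate T (\<lambda>t. if t < s then L else L) = L"
      unfolding avg_rate_def lint_step[OF s0 sT] using assms
      by (simp add: field_simps)
    have "(r1, r2) \<in> rate_region D H \<beta>0 T x p1 p2"
      unfolding rate_region_def e1 e2 e3 A1 A2 A3 using h by (auto simp: L_def)
    then show "(r1, r2) \<in> capacity_region D H \<beta>0 Pbar T"
      unfolding capacity_region_def using adm by blast
  }
qed

end
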